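(* Let $b>0$ and let $h,k\in\mathbb{R}$ satisfy $k\geqslant 4bh-b^2$ and $k\geqslant 2b$. Along any solution of the equations of motion lying on the common level set $\{H=h,\ K=k\}\subset\mathcal{P}^4$ (with $r_3\neq0$), the separation variables $x(t),y(t)$ satisfy, for appropriate branches of the square roots, $$(x-y)\frac{dx}{dt}=-\frac{1}{\sqrt b}\sqrt{-W(x)},\qquad (x-y)\frac{dy}{dt}=\frac{1}{\sqrt b}\sqrt{-W(y)},$$ where $$W(s)=(s^2-k-2b)(s^2-k+2b)(s^2-2bs+4bh-k).$$ Equivalently, $\dfrac{dx}{\sqrt{-W(x)}}+\dfrac{dy}{\sqrt{-W(y)}}=0$ and $\dfrac{x\,dx}{\sqrt{-W(x)}}+\dfrac{y\,dy}{\sqrt{-W(y)}}=-\dfrac{dt}{\sqrt b}$.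
   Context: Goryachev's integrable case of rigid body dynamics (with the normalization $c=1$). On $\mathbb{R}^6$ with coordinates $\mathbf{s}=(s_1,s_2,s_3)$, $\mathbf{r}=(r_1,r_2,r_3)$, take the Poisson brackets $\{s_i,s_j\}=-\varepsilon_{ijk}s_k$, $\{s_i,r_j\}=-\varepsilon_{ijk}r_k$, $\{r_i,r_j\}=0$, and the Hamiltonian $$H=\tfrac12(s_1^2+s_2^2+2s_3^2)+\tfrac12\Big[(r_1^2-r_2^2)+\frac{b}{r_3^2}\Big],$$ $b$ a real parameter. The equations of motion are $\dot s_1=s_2s_3+r_2r_3-b\,r_2/r_3^3$, $\dot s_2=-s_1s_3+r_1r_3+b\,r_1/r_3^2$, $\dot s_3=-2r_1r_2$, $\dot r_1=2s_3r_2-s_2r_3$, $\dot r_2=-2s_3r_1+s_1r_3$, $\dot r_3=s_2r_1-s_1r_2$. The Casimir functions are $\Gamma=r_1^2+r_2^2+r_3^2$, $L=s_1r_1+s_2r_2+s_3r_3$, and $\mathcal{P}^4=\{(\mathbf{s},\mathbf{r}):\Gamma=1,\ L=0\}$. The additional first integral on $\mathcal{P}^4$ is $$K=\Big(s_1^2+s_2^2+\frac{b}{r_3^2}\Big)^2+2r_3^2(s_1^2-s_2^2)+r_3^4.$$ Separation variables: put $z=r_3^2$, $u=s_1^2+s_2^2+b/r_3^2$; then $x,y$ are the two roots of $s^2-\frac{2b}{z}s+\left(\frac{2bu}{z}-k\right)=0$, so that $z=\frac{2b}{x+y}$, $u=\frac{xy+k}{x+y}$. *)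

theory Defs
  imports Complex_Main
begin

text \<open>Goryachev's case, normalization c = 1.\<close>

definition goryachev_H :: "real \<Rightarrow> real \<Rightarrow> real \<Rightarrow> real \<Rightarrow> real \<Rightarrow> real \<Rightarrow> real \<Rightarrow> real" where
  "goryachev_H b s1 s2 s3 r1 r2 r3 =
     (s1^2 + s2^2 + 2 * s3^2) / 2 + ((r1^2 - r2^2) + b / r3^2) / 2"

definition goryachev_K :: "real \<Rightarrow> real \<Rightarrow> real \<Rightarrow> real \<Rightarrow> real \<Rightarrow> real \<Rightarrow> real \<Rightarrow> real" where
  "goryachev_K b s1 s2 s3 r1 r2 r3 =
     (s1^2 + s2^2 + b / r3^2)^2 + 2 * r3^2 * (s1^2 - s2^2) + r3^4"

definition casimir_Gamma :: "real \<Rightarrow> real \<Rightarrow> real \<Rightarrow> real" where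
  "casimir_Gamma r1 r2 r3 = r1^2 + r2^2 + r3^2"

definition casimir_L :: "real \<Rightarrow> real \<Rightarrow> real \<Rightarrow> real \<Rightarrow> real \<Rightarrow> real \<Rightarrow> real" where
  "casimir_L s1 s2 s3 r1 r2 r3 = s1 * r1 + s2 * r2 + s3 * r3"

definition goryachev_W :: "real \<Rightarrow> real \<Rightarrow> real \<Rightarrow> real \<Rightarrow> real" where
  "goryachev_W b h k s = (s^2 - k - 2*b) * (s^2 - k + 2*b) * (s^2 - 2*b*s + 4*b*h - k)"

definition separation_pair :: "real \<Rightarrow> real \<Rightarrow> real \<Rightarrow> real \<Rightarrow> real \<Rightarrow> real \<Rightarrow> real \<Rightarrow> bool" where
  "separation_pair b k s1 s2 r3 x y \<longleftrightarrow>
     (let z = r3^2; u = s1^2 + s2^2 + b / r3^2 in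
        x + y = 2 * b / z \<and> x * y = 2 * b * u / z - k)"

end

theory Submission imports Defs begin

lemma poly_core:
  fixes n s1 s2 r1 r2 q :: real
  assumes "n^2*q^2 + 2*(s1^2+s2^2)*n - 2*(s1^2-s2^2) - q^2 = 0"
    and "r1^2+r2^2+q^2 = 1"
  shows "2*((s1*r2+s2*r1) + (s2*r1-s1*r2)*n)^2 + (n^2-1)*(n*q^2*(r1^2+r2^2) + 2*(s1*r1+s2*r2)^2 + q^2*(r1^2-r2^2)) = 0"
  using assms by algebra

lemma core2:
  fixes b s1 s2 s3 r1 r2 q x h k u :: real
  assumes q: "q \<noteq> 0" and G: "r1^2+r2^2+q^2 = 1" and L: "s1*r1+s2*r2+s3*q = 0"
    and hdef: "h = goryachev_H b s1 s2 s3 r1 r2 q"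
    and kdef: "k = goryachev_K b s1 s2 s3 r1 r2 q"
    and udef: "u = s1^2+s2^2+b/q^2"
    and xeq: "x^2 - (2*b/q^2)*x + (2*b*u/q^2 - k) = 0"
  shows "b*(x*(-4*b*(s2*r1-s1*r2)/q^3) - (4*b*(s1*r2+s2*r1)/q - 4*b*u*(s2*r1-s1*r2)/q^3))^2
          = - goryachev_W b h k x"
proof -
  define n where "n = (x-u)/q^2"
  have x: "x = u + n*q^2" using q by (simp add: n_def)
  have ku: "k = u^2 + 2*q^2*(s1^2-s2^2) + q^4"
    using kdef udef by (simp add: goryachev_K_def)
  have hu: "2*h = u + 2*s3^2 + r1^2 - r2^2"
    proof -
    have g: "\<And>B::real. h = (s1^2 + s2^2 + 2*s3^2)/2 + (r1^2 - r2^2 + B)/2 \<Longrightarrow> u = s1^2+s2^2+B \<Longrightarrow> 2*h = u + 2*s3^2 + r1^2 - r2^2"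
      by (simp add: field_simps)
    show ?thesis using g[of "b/q^2"] hdef udef unfolding goryachev_H_def by simp
  qed
  have c0: "q^2*(n^2*q^2 + 2*(s1^2+s2^2)*n - 2*(s1^2-s2^2) - q^2) = 0"
  proof -
    have "x^2 - (2*b/q^2)*x + (2*b*u/q^2 - k) = q^2*(n^2*q^2 + 2*(s1^2+s2^2)*n - 2*(s1^2-s2^2) - q^2)"
      unfolding x ku udef using q by (simp add: field_simps power2_eq_square power4_eq_xxxx)
    then show ?thesis using xeq by simp
  qed
  have c: "n^2*q^2 + 2*(s1^2+s2^2)*n - 2*(s1^2-s2^2) - q^2 = 0" using c0 q by simp
  note pc = poly_core[OF c G]
  have s3q: "s3*q = -(s1*r1+s2*r2)" using L by linarith
  have lhs: "x*(-4*b*(s2*r1-s1*r2)/q^3) - (4*b*(s1*r2+s2*r1)/q - 4*b*u*(s2*r1-s1*r2)/q^3)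
       = -4*b/q*((s1*r2+s2*r1) + (s2*r1-s1*r2)*n)"
    unfolding x using q by (simp add: field_simps power2_eq_square power3_eq_cube)
  have W: "goryachev_W b h k x = 8*b^3*(n^2-1)*(n - x + 2*h)"
  proof -
    have "x^2 - (2*b/q^2)*x + (2*b*u/q^2 - k) = x^2 - 2*b*n - k"
      using q by (simp add: x field_simps)
    then have e: "k = x^2 - 2*b*n" using xeq by simp
    show ?thesis unfolding goryachev_W_def e by (simp add: algebra_simps power2_eq_square power3_eq_cube)
  qed
  have W2: "q^2*(n - x + 2*h) = n*q^2*(r1^2+r2^2) + 2*(s1*r1+s2*r2)^2 + q^2*(r1^2-r2^2)"
  proof -
    have "q^2*s3^2 = (s1*r1+s2*r2)^2" using s3q by (metis power_mult_distrib power2_minus mult.commute)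
    moreover have "r1^2+r2^2 = 1 - q^2" using G by simp
    ultimately show ?thesis using x hu by algebra
  qed
  show ?thesis unfolding lhs W
  proof -
    have "b*(-4*b/q*((s1*r2+s2*r1) + (s2*r1-s1*r2)*n))^2 = 8*b^3/q^2 * (2*((s1*r2+s2*r1) + (s2*r1-s1*r2)*n)^2)"
      using q by (simp add: field_simps power2_eq_square power3_eq_cube)
    also have "\<dots> = 8*b^3/q^2 * (-(n^2-1)*(q^2*(n - x + 2*h)))" proof -
      have "2*((s1*r2+s2*r1) + (s2*r1-s1*r2)*n)^2 = -(n^2-1)*(q^2*(n - x + 2*h))" using pc W2 by algebra
      then show ?thesis by simp
    qed
    also have "\<dots> = - (8*b^3*(n^2-1)*(n - x + 2*h))" using q by (simp add: field_simps)
    finally show "b*(-4*b/q*((s1*r2+s2*r1) + (s2*r1-s1*r2)*n))^2 = - (8*b^3*(n^2-1)*(n - x + 2*h))" .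
  qed
qed


lemma sig:
  fixes b v w :: real
  assumes b: "b > 0" and e: "b*v^2 = -w"
  shows "w \<le> 0" "\<exists>\<sigma>\<in>{-1, 1::real}. v = -(\<sigma>/sqrt b) * sqrt (-w)"
    "\<exists>\<sigma>\<in>{-1, 1::real}. v = (\<sigma>/sqrt b) * sqrt (-w)"
proof -
  show "w \<le> 0" using e b by (metis neg_0_le_iff_le zero_le_mult_iff zero_le_power2 less_le)
  have sq: "sqrt (-w) = sqrt b * \<bar>v\<bar>" using b by (simp add: e[symmetric] real_sqrt_mult)
  have sb: "sqrt b > 0" using b by simp
  show "\<exists>\<sigma>\<in>{-1, 1::real}. v = -(\<sigma>/sqrt b) * sqrt (-w)"
  proof (cases "v \<ge> 0")
    case True then show ?thesis using sb by (intro bexI[of _ "-1"]) (auto simp: sq)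
  next
    case False then show ?thesis using sb by (intro bexI[of _ "1"]) (auto simp: sq)
  qed
  show "\<exists>\<sigma>\<in>{-1, 1::real}. v = (\<sigma>/sqrt b) * sqrt (-w)"
  proof (cases "v \<ge> 0")
    case True then show ?thesis using sb by (intro bexI[of _ "1"]) (auto simp: sq)
  next
    case False then show ?thesis using sb by (intro bexI[of _ "-1"]) (auto simp: sq)
  qed
qed

lemma dS:
  fixes r3 :: "real \<Rightarrow> real"
  assumes "(r3 has_real_derivative A) (at t)" "r3 t \<noteq> 0"
  shows "((\<lambda>t. 2*b/(r3 t)^2) has_real_derivative (-4*b*A/(r3 t)^3)) (at t)"
  using assms
  by (auto intro!: derivative_eq_intros simp: field_simps power2_eq_square power3_eq_cube)

lemma dP:
  fixes r3 s1 s2 :: "real \<Rightarrow> real"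
  assumes "(s1 has_real_derivative D1) (at t)" "(s2 has_real_derivative D2) (at t)"
    "(r3 has_real_derivative A) (at t)" "r3 t \<noteq> 0"
  shows "((\<lambda>t. 2*b*(s1 t^2+s2 t^2+b/(r3 t)^2)/(r3 t)^2 - k) has_real_derivative
     (2*b*(2*s1 t*D1 + 2*s2 t*D2 - 2*b*A/(r3 t)^3)/(r3 t)^2
      - 4*b*(s1 t^2+s2 t^2+b/(r3 t)^2)*A/(r3 t)^3)) (at t)"
  using assms
  by (auto intro!: derivative_eq_intros simp: field_simps power2_eq_square power3_eq_cube)


lemma e2alg:
  fixes s1 s2 s3 r1 r2 q b A B u :: real
  assumes q: "q \<noteq> 0" and A: "A = s2 * r1 - s1 * r2" and B: "B = s1 * r2 + s2 * r1" and u: "u = s1^2+s2^2+b/q^2"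
  shows "(2*b*(2*s1*(s2 * s3 + r2 * q - b * r2 / q ^ 3) + 2*s2*(- s1 * s3 + r1 * q + b * r1 / q ^ 3) - 2*b*A/q^3)/q^2
      - 4*b*(s1^2+s2^2+b/q^2)*A/q^3) = 4*b*B/q - 4*b*u*A/q^3"
proof -
  have "2*s1*(s2 * s3 + r2 * q - b * r2 / q ^ 3) + 2*s2*(- s1 * s3 + r1 * q + b * r1 / q ^ 3) = 2*q*B + 2*b*A/q^3"
    unfolding A B by (simp add: algebra_simps add_divide_distrib diff_divide_distrib)
  then show ?thesis unfolding u[symmetric] using q by (simp add: field_simps power2_eq_square power3_eq_cube)
qed

theorem theorem2:
  fixes b h k :: real
    and I :: "real set"
    and s1 s2 s3 r1 r2 r3 x y dx dy :: "real \<Rightarrow> real"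
  assumes b_pos: "b > 0"
    and hk1: "k \<ge> 4*b*h - b^2"
    and hk2: "k \<ge> 2*b"
    and I_open: "open I" and I_conn: "connected I"
    and r3_nz: "\<forall>t\<in>I. r3 t \<noteq> 0"
    and ode: "\<forall>t\<in>I.
       (s1 has_real_derivative (s2 t * s3 t + r2 t * r3 t - b * r2 t / r3 t ^ 3)) (at t) \<and>
       (s2 has_real_derivative (- s1 t * s3 t + r1 t * r3 t + b * r1 t / r3 t ^ 3)) (at t) \<and>
       (s3 has_real_derivative (- 2 * r1 t * r2 t)) (at t) \<and>
       (r1 has_real_derivative (2 * s3 t * r2 t - s2 t * r3 t)) (at t) \<and>
       (r2 has_real_derivative (- 2 * s3 t * r1 t + s1 t * r3 t)) (at t) \<and>
       (r3 has_real_derivative (s2 t * r1 t - s1 t * r2 t)) (at t)"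
    and on_P4: "\<forall>t\<in>I. casimir_Gamma (r1 t) (r2 t) (r3 t) = 1 \<and>
                        casimir_L (s1 t) (s2 t) (s3 t) (r1 t) (r2 t) (r3 t) = 0"
    and level: "\<forall>t\<in>I. goryachev_H b (s1 t) (s2 t) (s3 t) (r1 t) (r2 t) (r3 t) = h \<and>
                       goryachev_K b (s1 t) (s2 t) (s3 t) (r1 t) (r2 t) (r3 t) = k"
    and sep: "\<forall>t\<in>I. separation_pair b k (s1 t) (s2 t) (r3 t) (x t) (y t)"
    and x_deriv: "\<forall>t\<in>I. (x has_real_derivative dx t) (at t)"
    and y_deriv: "\<forall>t\<in>I. (y has_real_derivative dy t) (at t)"
  shows "\<forall>t\<in>I. goryachev_W b h k (x t) \<le> 0 \<and> goryachev_W b h k (y t) \<le> 0 \<and>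
           (\<exists>\<sigma>\<in>{-1, 1::real}. (x t - y t) * dx t = - (\<sigma> / sqrt b) * sqrt (- goryachev_W b h k (x t))) \<and>
           (\<exists>\<sigma>\<in>{-1, 1::real}. (x t - y t) * dy t = (\<sigma> / sqrt b) * sqrt (- goryachev_W b h k (y t)))"
proof
  fix t assume t: "t \<in> I"
  define q where "q = r3 t"
  have q: "q \<noteq> 0" using r3_nz t q_def by auto
  have G: "r1 t^2 + r2 t^2 + q^2 = 1" using on_P4 t unfolding q_def casimir_Gamma_def by auto
  have L: "s1 t*r1 t + s2 t*r2 t + s3 t*q = 0" using on_P4 t unfolding q_def casimir_L_def by auto
  have hd: "h = goryachev_H b (s1 t) (s2 t) (s3 t) (r1 t) (r2 t) q"
   and kd: "k = goryachev_K b (s1 t) (s2 t) (s3 t) (r1 t) (r2 t) q" using level t q_def by auto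
  define u where "u = s1 t^2 + s2 t^2 + b/q^2"
  have sepI: "\<And>t. t \<in> I \<Longrightarrow> x t + y t = 2*b/(r3 t)^2 \<and>
      x t * y t = 2*b*(s1 t^2+s2 t^2+b/(r3 t)^2)/(r3 t)^2 - k"
    using sep unfolding separation_pair_def Let_def by auto
  note o = ode[rule_format, OF t]
  define A where "A = s2 t * r1 t - s1 t * r2 t"
  define B where "B = s1 t * r2 t + s2 t * r1 t"
  have e1: "dx t + dy t = -4*b*A/q^3"
  proof -
    have "((\<lambda>t. x t + y t) has_real_derivative (dx t + dy t)) (at t)"
      using x_deriv y_deriv t by (auto intro!: derivative_eq_intros)
    then have "((\<lambda>t. 2*b/(r3 t)^2) has_real_derivative (dx t + dy t)) (at t)"
      by (rule has_field_derivative_transform_within_open[OF _ I_open t]) (use sepI in auto)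
    moreover have "((\<lambda>t. 2*b/(r3 t)^2) has_real_derivative (-4*b*A/q^3)) (at t)"
      using dS[of r3 _ t b] o r3_nz t unfolding A_def q_def by auto
    ultimately show ?thesis by (rule DERIV_unique)
  qed
  have e2: "x t * dy t + dx t * y t = 4*b*B/q - 4*b*u*A/q^3"
  proof -
    have "((\<lambda>t. x t * y t) has_real_derivative (x t * dy t + dx t * y t)) (at t)"
      using x_deriv y_deriv t by (auto intro!: derivative_eq_intros)
    then have D1: "((\<lambda>t. 2*b*(s1 t^2+s2 t^2+b/(r3 t)^2)/(r3 t)^2 - k) has_real_derivative (x t * dy t + dx t * y t)) (at t)"
      by (rule has_field_derivative_transform_within_open[OF _ I_open t]) (use sepI in auto)
    have D2: "((\<lambda>t. 2*b*(s1 t^2+s2 t^2+b/(r3 t)^2)/(r3 t)^2 - k) has_real_derivative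
     (2*b*(2*s1 t*(s2 t * s3 t + r2 t * r3 t - b * r2 t / r3 t ^ 3) + 2*s2 t*(- s1 t * s3 t + r1 t * r3 t + b * r1 t / r3 t ^ 3) - 2*b*A/(r3 t)^3)/(r3 t)^2
      - 4*b*(s1 t^2+s2 t^2+b/(r3 t)^2)*A/(r3 t)^3)) (at t)"
      using dP[of s1 _ t s2 _ r3 A b k] o r3_nz t unfolding A_def by auto
    have E: "(2*b*(2*s1 t*(s2 t * s3 t + r2 t * r3 t - b * r2 t / r3 t ^ 3) + 2*s2 t*(- s1 t * s3 t + r1 t * r3 t + b * r1 t / r3 t ^ 3) - 2*b*A/(r3 t)^3)/(r3 t)^2
      - 4*b*(s1 t^2+s2 t^2+b/(r3 t)^2)*A/(r3 t)^3) = 4*b*B/q - 4*b*u*A/q^3"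
      using e2alg[OF q A_def B_def u_def] unfolding q_def by simp
    show ?thesis using trans[OF DERIV_unique[OF D1 D2] E] .
  qed
  have xs: "x t + y t = 2*b/q^2" "x t * y t = 2*b*u/q^2 - k"
    using sepI[OF t] unfolding q_def u_def by auto
  have xeq: "(x t)^2 - (2*b/q^2)*(x t) + (2*b*u/q^2 - k) = 0"
    proof -
    have "(x t)^2 - (x t + y t)*(x t) + x t * y t = 0" by (simp add: power2_eq_square algebra_simps)
    then show ?thesis unfolding xs .
  qed
  have yeq: "(y t)^2 - (2*b/q^2)*(y t) + (2*b*u/q^2 - k) = 0"
    proof -
    have "(y t)^2 - (x t + y t)*(y t) + x t * y t = 0" by (simp add: power2_eq_square algebra_simps)
    then show ?thesis unfolding xs .
  qed
  note cx = core2[OF q G L hd kd u_def xeq]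
  note cy = core2[OF q G L hd kd u_def yeq]
  have vx: "(x t - y t) * dx t = x t*(-4*b*A/q^3) - (4*b*B/q - 4*b*u*A/q^3)"
    unfolding e1[symmetric] e2[symmetric] by (simp add: algebra_simps)
  have vy: "(x t - y t) * dy t = -(y t*(-4*b*A/q^3) - (4*b*B/q - 4*b*u*A/q^3))"
    unfolding e1[symmetric] e2[symmetric] by (simp add: algebra_simps)
  have ex: "b*((x t - y t) * dx t)^2 = - goryachev_W b h k (x t)"
    unfolding vx A_def B_def by (rule cx)
  have ey: "b*((x t - y t) * dy t)^2 = - goryachev_W b h k (y t)"
    unfolding vy power2_minus A_def B_def by (rule cy)
  show "goryachev_W b h k (x t) \<le> 0 \<and> goryachev_W b h k (y t) \<le> 0 \<and>
           (\<exists>\<sigma>\<in>{-1, 1::real}. (x t - y t) * dx t = - (\<sigma> / sqrt b) * sqrt (- goryachev_W b h k (x t))) \<and>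
           (\<exists>\<sigma>\<in>{-1, 1::real}. (x t - y t) * dy t = (\<sigma> / sqrt b) * sqrt (- goryachev_W b h k (y t)))"
    using sig[OF b_pos ex] sig[OF b_pos ey] by blast
qed

end
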